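(* Let $f \in C((0,\infty);(0,\infty))$ be asymptotically increasing with $\lim_{x\to\infty} f(x)/x = \infty$, and define $\bar F(x) = \int_0^x f(s)\,ds$ for $x>0$. Then $\bar F$ preserves superexponential growth.
   Context: "$f$ is asymptotically increasing" means that there is a continuous increasing function $\phi:(0,\infty)\to(0,\infty)$ with $f(x)/\phi(x)\to 1$ as $x\to\infty$. A function $g \in C((0,\infty);(0,\infty))$ exhibits superexponential growth if $g(x)\to\infty$ as $x\to\infty$ and $\lim_{x\to\infty} g(x-\epsilon)/g(x) = 0$ for each $\epsilon>0$. A function $\phi \in C((0,\infty);(0,\infty))$ preserves superexponential growth if for every $g$ exhibiting superexponential growth and every $\epsilon>0$, $\lim_{x\to\infty}\phi(g(x-\epsilon))/\phi(g(x)) = 0$. *)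

theory Defs
  imports "HOL-Analysis.Analysis"
begin

definition pos_cont :: "(real \<Rightarrow> real) \<Rightarrow> bool" where
  "pos_cont f \<longleftrightarrow> continuous_on {0<..} f \<and> (\<forall>x>0. f x > 0)"

definition asymp_increasing :: "(real \<Rightarrow> real) \<Rightarrow> bool" where
  "asymp_increasing f \<longleftrightarrow>
     (\<exists>\<phi>. pos_cont \<phi> \<and> mono_on {0<..} \<phi> \<and> ((\<lambda>x. f x / \<phi> x) \<longlongrightarrow> 1) at_top)"

definition superexp_growth :: "(real \<Rightarrow> real) \<Rightarrow> bool" where
  "superexp_growth g \<longleftrightarrow> pos_cont g \<and> filterlim g at_top at_top \<and>
     (\<forall>\<epsilon>>0. ((\<lambda>x. g (x - \<epsilon>) / g x) \<longlongrightarrow> 0) at_top)"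

definition preserves_superexp :: "(real \<Rightarrow> real) \<Rightarrow> bool" where
  "preserves_superexp \<phi> \<longleftrightarrow> pos_cont \<phi> \<and>
     (\<forall>g. superexp_growth g \<longrightarrow>
        (\<forall>\<epsilon>>0. ((\<lambda>x. \<phi> (g (x - \<epsilon>)) / \<phi> (g x)) \<longlongrightarrow> 0) at_top))"

end

theory Submission
  imports Defs
begin

lemma F_nonneg:
  fixes f :: "real \<Rightarrow> real"
  assumes pos: "\<And>x. x > 0 \<Longrightarrow> f x > 0" and int: "f integrable_on {0..c}" and c: "c \<ge> 0"
  shows "integral {0..c} f \<ge> 0"
proof -
  have eq: "integral {0..c} f = integral {0..c} (\<lambda>x. \<bar>f x\<bar>)"
    by (rule integral_spike[of "{0}"]) (simp, metis Diff_iff abs_of_pos atLeastAtMost_iff insertI1 less_eq_real_def pos)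
  have "(\<lambda>x. \<bar>f x\<bar>) integrable_on {0..c}"
    by (rule integrable_spike[OF int, of "{0}"]) (auto intro!: abs_of_pos pos)
  then show ?thesis unfolding eq by (rule integral_nonneg) auto
qed

lemma int_pos_interval:
  fixes f :: "real \<Rightarrow> real"
  assumes cont: "continuous_on {0<..} f" and pos: "\<And>x. x > 0 \<Longrightarrow> f x > 0"
    and int: "f integrable_on {c..d}" and c: "0 < c" "c < d"
  shows "integral {c..d} f > 0"
proof -
  have "continuous_on {c..d} f" by (rule continuous_on_subset[OF cont]) (use c in auto)
  then obtain x0 where x0: "x0 \<in> {c..d}" "\<And>y. y \<in> {c..d} \<Longrightarrow> f x0 \<le> f y"
    using continuous_attains_inf[of "{c..d}" f] c by auto
  have "integral {c..d} (\<lambda>x. f x0) \<le> integral {c..d} f"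
    by (rule integral_le) (use x0 int in auto)
  moreover have "integral {c..d} (\<lambda>x. f x0) = (d - c) * f x0" using c by simp
  moreover have "f x0 > 0" using x0 c pos by auto
  ultimately show ?thesis using c by (smt (verit) mult_pos_pos)
qed

theorem corollary1:
  fixes f :: "real \<Rightarrow> real"
  assumes "pos_cont f"
    and "\<And>x. x > 0 \<Longrightarrow> f integrable_on {0..x}"
    and "asymp_increasing f"
    and "filterlim (\<lambda>x. f x / x) at_top at_top"
  shows "preserves_superexp (\<lambda>x. integral {0..x} f)"
proof -
  define F where "F x = integral {0..x} f" for x
  have cont: "continuous_on {0<..} f" and pos: "\<And>x. x > 0 \<Longrightarrow> f x > 0"
    using assms(1) unfolding pos_cont_def by auto
  have intI: "f integrable_on {c..d}" if "0 \<le> c" "c \<le> d" "d > 0" for c d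
    by (rule integrable_subinterval_real[OF assms(2)[OF that(3)]]) (use that in auto)
  have comb: "F d = F c + integral {c..d} f" if "0 \<le> c" "c \<le> d" "d > 0" for c d
    unfolding F_def using Henstock_Kurzweil_Integration.integral_combine[where a=0 and c=c and b=d and f=f] that assms(2)[OF that(3)] by simp
  have Fnn: "F x \<ge> 0" if "x \<ge> 0" for x
  proof (cases "x = 0")
    case True then show ?thesis by (simp add: F_def)
  next
    case False then show ?thesis unfolding F_def using that
      by (intro F_nonneg[OF pos assms(2)]) auto
  qed
  have Fpos: "F x > 0" if "x > 0" for x
  proof -
    have "F x = F (x/2) + integral {x/2..x} f" using comb[of "x/2" x] that by simp
    moreover have "F (x/2) \<ge> 0" using Fnn that by simp
    moreover have "integral {x/2..x} f > 0"
      by (rule int_pos_interval[OF cont pos intI]) (use that in auto)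
    ultimately show ?thesis by simp
  qed
  have Fcont: "continuous_on {0<..} F"
  proof (rule continuous_at_imp_continuous_on, rule ballI)
    fix x :: real assume "x \<in> {0<..}"
    then have x: "x > 0" by simp
    have "continuous_on {0..x+1} F" unfolding F_def
      by (rule indefinite_integral_continuous_1[OF assms(2)]) (use x in simp)
    moreover have "x \<in> interior {0..x+1}" using x by simp
    ultimately show "isCont F x" by (rule continuous_on_interior)
  qed
  obtain \<phi> where phi: "pos_cont \<phi>" "mono_on {0<..} \<phi>" "((\<lambda>x. f x / \<phi> x) \<longlongrightarrow> 1) at_top"
    using assms(3) unfolding asymp_increasing_def by blast
  have phipos: "\<And>x. x > 0 \<Longrightarrow> \<phi> x > 0" using phi(1) unfolding pos_cont_def by auto
  have "eventually (\<lambda>x. f x / \<phi> x > 1/2) at_top"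
    using order_tendstoD(1)[OF phi(3), of "1/2"] by simp
  moreover have "eventually (\<lambda>x. f x / \<phi> x < 2) at_top"
    using order_tendstoD(2)[OF phi(3), of 2] by simp
  ultimately have "eventually (\<lambda>x. f x / \<phi> x > 1/2 \<and> f x / \<phi> x < 2) at_top"
    by (rule eventually_conj)
  then obtain A0 where A0: "\<And>x. x \<ge> A0 \<Longrightarrow> f x / \<phi> x > 1/2 \<and> f x / \<phi> x < 2"
    by (auto simp: eventually_at_top_linorder)
  define A where "A = max A0 1"
  have A1: "A \<ge> 1" by (simp add: A_def)
  have fb: "\<phi> t / 2 \<le> f t \<and> f t \<le> 2 * \<phi> t" if "t \<ge> A" for t
  proof -
    have "t > 0" "\<phi> t > 0" using that A1 phipos by auto
    moreover have "f t / \<phi> t > 1/2 \<and> f t / \<phi> t < 2" using A0 that by (simp add: A_def)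
    ultimately show ?thesis by (simp add: field_simps)
  qed
  have phimono: "\<phi> s \<le> \<phi> t" if "0 < s" "s \<le> t" for s t
    using phi(2) that by (auto simp: mono_on_def)
  define c where "c = 4 * F A / \<phi> A"
  have key: "F a / F b \<le> c * inverse b + 8 * (a / b)" if a: "A \<le> a" and b: "2 * a \<le> b" for a b
  proof -
    have a0: "a > 0" using a A1 by simp
    have b0: "b > 0" using a0 b by simp
    have "integral {A..a} f \<le> integral {A..a} (\<lambda>t. 2 * \<phi> a)"
    proof (rule integral_le)
      show "f integrable_on {A..a}" using intI A1 a by simp
      show "(\<lambda>t. 2 * \<phi> a) integrable_on {A..a}" by (rule integrable_const_ivl)
      fix t assume t: "t \<in> {A..a}"
      then have "f t \<le> 2 * \<phi> t" using fb by simp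
      also have "\<phi> t \<le> \<phi> a" using phimono t A1 by simp
      finally show "f t \<le> 2 * \<phi> a" by simp
    qed
    also have "\<dots> = (a - A) * (2 * \<phi> a)" using a by simp
    also have "\<dots> \<le> 2 * a * \<phi> a" using A1 phipos[OF a0] by (simp add: algebra_simps)
    finally have up: "F a \<le> F A + 2 * a * \<phi> a" using comb[of A a] A1 a by simp
    have "integral {b/2..b} (\<lambda>t. \<phi> a / 2) \<le> integral {b/2..b} f"
    proof (rule integral_le)
      show "f integrable_on {b/2..b}" using intI b0 by simp
      show "(\<lambda>t. \<phi> a / 2) integrable_on {b/2..b}" by (rule integrable_const_ivl)
      fix t assume t: "t \<in> {b/2..b}"
      then have "\<phi> a \<le> \<phi> t" using phimono a0 b by simp
      also have "\<phi> t / 2 \<le> f t" using fb t a b by simp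
      finally show "\<phi> a / 2 \<le> f t" by simp
    qed
    moreover have "integral {b/2..b} (\<lambda>t. \<phi> a / 2) = b/2 * (\<phi> a / 2)" using b0 by simp
    moreover have "F b = F (b/2) + integral {b/2..b} f" using comb[of "b/2" b] b0 by simp
    moreover have "F (b/2) \<ge> 0" using Fnn b0 by simp
    ultimately have low1: "F b \<ge> b * \<phi> a / 4" using b0 by (simp add: field_simps)
    have "\<phi> A \<le> \<phi> a" using phimono A1 a by simp
    then have "b * \<phi> A \<le> b * \<phi> a" using b0 by (simp add: mult_left_mono)
    then have low2: "F b \<ge> b * \<phi> A / 4" using low1 by linarith
    have Fb: "F b > 0" using Fpos b0 by simp
    have pa: "\<phi> a > 0" "\<phi> A > 0" using phipos a0 A1 by auto
    have FA: "F A \<ge> 0" using Fnn A1 by simp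
    have "F a / F b \<le> F A / F b + 2 * a * \<phi> a / F b"
      using up Fb by (simp add: add_divide_distrib[symmetric] divide_right_mono)
    also have "F A / F b \<le> F A / (b * \<phi> A / 4)"
      by (rule divide_left_mono) (use FA low2 b0 pa Fb in auto)
    also have "2 * a * \<phi> a / F b \<le> 2 * a * \<phi> a / (b * \<phi> a / 4)"
      by (rule divide_left_mono) (use a0 low1 b0 pa Fb in auto)
    also have "F A / (b * \<phi> A / 4) + 2 * a * \<phi> a / (b * \<phi> a / 4) = c * inverse b + 8 * (a / b)"
      using pa b0 by (simp add: c_def field_simps)
    finally show ?thesis by simp
  qed
  have main: "((\<lambda>x. F (g (x - \<epsilon>)) / F (g x)) \<longlongrightarrow> 0) at_top"
    if g: "superexp_growth g" and e: "\<epsilon> > 0" for g \<epsilon>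
  proof -
    have gpos: "\<And>x. x > 0 \<Longrightarrow> g x > 0" and glim: "filterlim g at_top at_top"
      and gq: "((\<lambda>x. g (x - \<epsilon>) / g x) \<longlongrightarrow> 0) at_top"
      using g e unfolding superexp_growth_def pos_cont_def by auto
    have glim2: "filterlim (\<lambda>x. g (x - \<epsilon>)) at_top at_top"
      by (rule filterlim_compose[OF glim]) (rule filterlim_minus_const_nat_at_top[THEN filterlim_mono] | real_asymp)
    have ev1: "eventually (\<lambda>x. g (x - \<epsilon>) \<ge> A) at_top"
      using glim2 by (simp add: filterlim_at_top)
    have ev2: "eventually (\<lambda>x. g (x - \<epsilon>) / g x < 1/2) at_top"
      using order_tendstoD(2)[OF gq, of "1/2"] by simp
    have ev3: "eventually (\<lambda>x::real. x > 0) at_top" by (rule eventually_gt_at_top)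
    have ev: "eventually (\<lambda>x. 0 \<le> F (g (x - \<epsilon>)) / F (g x) \<and>
        F (g (x - \<epsilon>)) / F (g x) \<le> c * inverse (g x) + 8 * (g (x - \<epsilon>) / g x)) at_top"
      using ev1 ev2 ev3
    proof eventually_elim
      case (elim x)
      then have gx: "g x > 0" using gpos by simp
      have "2 * g (x - \<epsilon>) \<le> g x" using elim(2) gx by (simp add: field_simps)
      then show ?case using key[OF elim(1)] Fnn Fpos gx elim(1) A1 by simp
    qed
    have lim: "((\<lambda>x. c * inverse (g x) + 8 * (g (x - \<epsilon>) / g x)) \<longlongrightarrow> 0) at_top"
    proof -
      have "((\<lambda>x. c * inverse (g x)) \<longlongrightarrow> c * 0) at_top"
        by (intro tendsto_mult tendsto_const tendsto_inverse_0_at_top glim)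
      moreover have "((\<lambda>x. 8 * (g (x - \<epsilon>) / g x)) \<longlongrightarrow> 8 * 0) at_top"
        by (intro tendsto_mult tendsto_const gq)
      ultimately show ?thesis using tendsto_add by fastforce
    qed
    show ?thesis
      by (rule tendsto_sandwich[OF _ _ tendsto_const lim]) (use ev in \<open>auto elim: eventually_mono\<close>)
  qed
  show ?thesis
    unfolding preserves_superexp_def pos_cont_def
    using Fcont Fpos main unfolding F_def by auto
qed

end
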